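(* Let $R$ be a commutative ring with identity in which the map $r \mapsto 2r$ is injective. Let $L_x, L_y \geq 1$, and let $f, g \in R[x,y]$ both have length $L_x$ in $x$ and length $L_y$ in $y$; write $h = fg$. Put $N = \lceil L_x/2 \rceil$. The polynomials $f(x,\pm x^N)$, $x^{N(L_y-1)}f(x,\pm x^{-N})$ and the analogous ones for $g$ lie in $R[x]$ and have length $N(L_y-1)+L_x$. Using the four products $h(x,\pm x^N) = f(x,\pm x^N)g(x,\pm x^N)$ and $x^{2N(L_y-1)}h(x,\pm x^{-N}) = x^{N(L_y-1)}f(x,\pm x^{-N})\cdot x^{N(L_y-1)}g(x,\pm x^{-N})$, the problem of computing $h = fg$ (the `four-point' Kronecker substitution) reduces to four multiplications of polynomials of length $\lceil L_x/2\rceil(L_y-1) + L_x$ in $R[x]$, plus $O(L_xL_y)$ additions/subtractions in $R$ and $O(L_xL_y)$ divisions by $2$ in $R$ (covering both forming the evaluations and recovering all coefficients of $h$).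
   Context: A polynomial $p \in R[x]$ is regarded as a vector of coefficients of a known length $\ell$ (the coefficient of $x^{\ell-1}$ may be zero). A bivariate $p \in R[x,y]$ is a rectangular array of coefficients with a length $\ell_x$ in $x$ and a length $\ell_y$ in $y$, written $p = \sum_{i=0}^{\ell_y-1} p_i(x) y^i$ with each $p_i \in R[x]$ of length $\ell_x$. The product $h = fg$ has length $2L_x - 1$ in $x$ and $2L_y-1$ in $y$. Division by $2$ means computing the unique $s$ with $2s = r$ for an element $r \in 2R$. *)

theory Defs
  imports "HOL-Computational_Algebra.Polynomial"
begin

text \<open>Bivariate polynomials over R are rendered as 'a poly poly:
  p = sum_i p_i(x) y^i, with p_i = coeff p i :: 'a poly.\<close>

definition has_len :: "nat \<Rightarrow> 'a::zero poly \<Rightarrow> bool" where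
  "has_len l p \<longleftrightarrow> (\<forall>j\<ge>l. coeff p j = 0)"

definition has_len2 :: "nat \<Rightarrow> nat \<Rightarrow> 'a::zero poly poly \<Rightarrow> bool" where
  "has_len2 lx ly p \<longleftrightarrow> (\<forall>i\<ge>ly. coeff p i = 0) \<and> (\<forall>i j. j \<ge> lx \<longrightarrow> coeff (coeff p i) j = 0)"

definition coeff_list :: "nat \<Rightarrow> 'a::zero poly \<Rightarrow> 'a list" where
  "coeff_list l p = map (coeff p) [0..<l]"

definition coeff_list2 :: "nat \<Rightarrow> nat \<Rightarrow> 'a::zero poly poly \<Rightarrow> 'a list" where
  "coeff_list2 lx ly p = concat (map (\<lambda>i. coeff_list lx (coeff p i)) [0..<ly])"

definition sub_pos :: "nat \<Rightarrow> 'a::comm_ring_1 \<Rightarrow> 'a poly poly \<Rightarrow> 'a poly" where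
  "sub_pos N s p = poly p (monom s N)"

text \<open>x^(N(l-1)) p(x, s x^(-N)) where p has length l in y (s = +1 or -1):
  literally sum_{i<l} p_i(x) s^i x^(N(l-1-i)).\<close>
definition sub_rev :: "nat \<Rightarrow> nat \<Rightarrow> 'a::comm_ring_1 \<Rightarrow> 'a poly poly \<Rightarrow> 'a poly" where
  "sub_rev N l s p = (\<Sum>i<l. smult (s ^ i) (coeff p i * monom 1 (N * (l - 1 - i))))"

text \<open>Division by 2: the unique s with 2 s = r (for r in 2R).\<close>
definition half :: "'a::comm_ring_1 \<Rightarrow> 'a" where
  "half r = (THE s. 2 * s = r)"

text \<open>The cost of a program is its number of instructions.\<close>
datatype instr = Add nat nat | Sub nat nat | Half nat

fun run :: "'a::comm_ring_1 list \<Rightarrow> instr list \<Rightarrow> 'a list" where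
  "run vs [] = vs"
| "run vs (Add i j # P) = run (vs @ [vs ! i + vs ! j]) P"
| "run vs (Sub i j # P) = run (vs @ [vs ! i - vs ! j]) P"
| "run vs (Half i # P) = run (vs @ [half (vs ! i)]) P"

definition slp_computes :: "instr list \<Rightarrow> nat list \<Rightarrow> 'a::comm_ring_1 list \<Rightarrow> 'a list \<Rightarrow> bool" where
  "slp_computes P outs inp res \<longleftrightarrow>
     (\<forall>k\<in>set outs. k < length inp + length P) \<and> map (\<lambda>k. run inp P ! k) outs = res"

end

theory Submission
  imports Defs
begin


datatype tm = TInp nat | TOut nat | TZero | TAdd tm tm | TSub tm tm | THalf tm

fun ev :: "'a::comm_ring_1 list \<Rightarrow> (nat \<Rightarrow> 'a) \<Rightarrow> tm \<Rightarrow> 'a" where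
  "ev inp w (TInp i) = inp ! i"
| "ev inp w (TOut s) = w s"
| "ev inp w TZero = 0"
| "ev inp w (TAdd a b) = ev inp w a + ev inp w b"
| "ev inp w (TSub a b) = ev inp w a - ev inp w b"
| "ev inp w (THalf a) = half (ev inp w a)"

fun wft :: "nat \<Rightarrow> nat \<Rightarrow> tm \<Rightarrow> bool" where
  "wft ni no (TInp i) = (i < ni)"
| "wft ni no (TOut s) = (s < no)"
| "wft ni no TZero = True"
| "wft ni no (TAdd a b) = (wft ni no a \<and> wft ni no b)"
| "wft ni no (TSub a b) = (wft ni no a \<and> wft ni no b)"
| "wft ni no (THalf a) = wft ni no a"

fun tsz :: "tm \<Rightarrow> nat" where
  "tsz (TInp i) = 0"
| "tsz (TOut s) = 0"
| "tsz TZero = 1"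
| "tsz (TAdd a b) = Suc (tsz a + tsz b)"
| "tsz (TSub a b) = Suc (tsz a + tsz b)"
| "tsz (THalf a) = Suc (tsz a)"

fun tcomp :: "tm \<Rightarrow> nat \<Rightarrow> (nat \<Rightarrow> nat) \<Rightarrow> instr list \<times> nat" where
  "tcomp (TInp i) n r = ([], i)"
| "tcomp (TOut s) n r = ([], r s)"
| "tcomp TZero n r = ([Sub 0 0], n)"
| "tcomp (TAdd a b) n r = (let ca = tcomp a n r; cb = tcomp b (n + length (fst ca)) r in
     (fst ca @ fst cb @ [Add (snd ca) (snd cb)], n + length (fst ca) + length (fst cb)))"
| "tcomp (TSub a b) n r = (let ca = tcomp a n r; cb = tcomp b (n + length (fst ca)) r in
     (fst ca @ fst cb @ [Sub (snd ca) (snd cb)], n + length (fst ca) + length (fst cb)))"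
| "tcomp (THalf a) n r = (let ca = tcomp a n r in
     (fst ca @ [Half (snd ca)], n + length (fst ca)))"

lemma run_append: "run vs (P @ Q) = run (run vs P) Q"
  by (induction vs P rule: run.induct) auto

lemma run_len: "length (run vs P) = length vs + length P"
  by (induction vs P rule: run.induct) auto

lemma run_keep: "k < length vs \<Longrightarrow> run vs P ! k = vs ! k"
  by (induction vs P rule: run.induct) (auto simp: nth_append)

lemma comp_len: "length (fst (tcomp t n r)) = tsz t"
  by (induction t arbitrary: n) (auto simp: Let_def)

lemma comp_ok:
  assumes "wft ni no t" "length vs = n" "ni \<le> n" "\<forall>i<ni. vs!i = inp!i"
    "\<forall>s<no. r s < n \<and> vs!(r s) = w s"
  shows "snd (tcomp t n r) < n + length (fst (tcomp t n r)) \<and>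
         run vs (fst (tcomp t n r)) ! snd (tcomp t n r) = ev inp w t"
  using assms
proof (induction t arbitrary: n vs)
  case (TInp i) then show ?case by auto
next
  case (TOut s) then show ?case by auto
next
  case TZero then show ?case by auto
next
  case (TAdd a b)
  define ca where "ca = tcomp a n r"
  define vs1 where "vs1 = run vs (fst ca)"
  define cb where "cb = tcomp b (n + length (fst ca)) r"
  define vs2 where "vs2 = run vs1 (fst cb)"
  have A: "snd ca < n + length (fst ca) \<and> vs1 ! snd ca = ev inp w a"
    using TAdd.IH(1)[of vs n] TAdd.prems unfolding ca_def vs1_def by auto
  have l1: "length vs1 = n + length (fst ca)" unfolding vs1_def using TAdd.prems(2) by (simp add: run_len)
  have B: "snd cb < n + length (fst ca) + length (fst cb) \<and> vs2 ! snd cb = ev inp w b"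
  proof -
    have p1: "\<forall>s<no. r s < n + length (fst ca) \<and> vs1 ! r s = w s"
      using TAdd.prems(2,5) run_keep[of _ vs] unfolding vs1_def by auto
    have p2: "\<forall>i<ni. vs1 ! i = inp ! i"
      using TAdd.prems(2,3,4) run_keep[of _ vs] unfolding vs1_def by auto
    show ?thesis using TAdd.IH(2)[OF _ l1 _ p2 p1] TAdd.prems unfolding cb_def vs2_def by auto
  qed
  have l2: "length vs2 = n + length (fst ca) + length (fst cb)" unfolding vs2_def using l1 by (simp add: run_len)
  have "run vs (fst (tcomp (TAdd a b) n r)) = vs2 @ [vs2 ! snd ca + vs2 ! snd cb]"
    by (simp add: Let_def ca_def[symmetric] cb_def[symmetric] run_append vs1_def[symmetric] vs2_def[symmetric])
  moreover have "vs2 ! snd ca = vs1 ! snd ca" unfolding vs2_def using A l1 by (simp add: run_keep)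
  ultimately show ?case using A B l2
    by (simp add: Let_def ca_def[symmetric] cb_def[symmetric] nth_append)
next
  case (TSub a b)
  define ca where "ca = tcomp a n r"
  define vs1 where "vs1 = run vs (fst ca)"
  define cb where "cb = tcomp b (n + length (fst ca)) r"
  define vs2 where "vs2 = run vs1 (fst cb)"
  have A: "snd ca < n + length (fst ca) \<and> vs1 ! snd ca = ev inp w a"
    using TSub.IH(1)[of vs n] TSub.prems unfolding ca_def vs1_def by auto
  have l1: "length vs1 = n + length (fst ca)" unfolding vs1_def using TSub.prems(2) by (simp add: run_len)
  have B: "snd cb < n + length (fst ca) + length (fst cb) \<and> vs2 ! snd cb = ev inp w b"
  proof -
    have p1: "\<forall>s<no. r s < n + length (fst ca) \<and> vs1 ! r s = w s"
      using TSub.prems(2,5) run_keep[of _ vs] unfolding vs1_def by auto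
    have p2: "\<forall>i<ni. vs1 ! i = inp ! i"
      using TSub.prems(2,3,4) run_keep[of _ vs] unfolding vs1_def by auto
    show ?thesis using TSub.IH(2)[OF _ l1 _ p2 p1] TSub.prems unfolding cb_def vs2_def by auto
  qed
  have l2: "length vs2 = n + length (fst ca) + length (fst cb)" unfolding vs2_def using l1 by (simp add: run_len)
  have "run vs (fst (tcomp (TSub a b) n r)) = vs2 @ [vs2 ! snd ca - vs2 ! snd cb]"
    by (simp add: Let_def ca_def[symmetric] cb_def[symmetric] run_append vs1_def[symmetric] vs2_def[symmetric])
  moreover have "vs2 ! snd ca = vs1 ! snd ca" unfolding vs2_def using A l1 by (simp add: run_keep)
  ultimately show ?case using A B l2
    by (simp add: Let_def ca_def[symmetric] cb_def[symmetric] nth_append)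
next
  case (THalf a)
  define ca where "ca = tcomp a n r"
  define vs1 where "vs1 = run vs (fst ca)"
  have A: "snd ca < n + length (fst ca) \<and> vs1 ! snd ca = ev inp w a"
    using THalf.IH[of vs n] THalf.prems unfolding ca_def vs1_def by auto
  have l1: "length vs1 = n + length (fst ca)" unfolding vs1_def using THalf.prems(2) by (simp add: run_len)
  have "run vs (fst (tcomp (THalf a) n r)) = vs1 @ [half (vs1 ! snd ca)]"
    by (simp add: Let_def ca_def[symmetric] run_append vs1_def[symmetric])
  then show ?case using A l1
    by (simp add: Let_def ca_def[symmetric] nth_append)
qed

fun compl :: "tm list \<Rightarrow> nat \<Rightarrow> nat list \<Rightarrow> instr list \<times> nat list" where
  "compl [] n rs = ([], rs)"
| "compl (t # ts) n rs = (let c = tcomp t n (\<lambda>s. rs ! s); res = compl ts (n + length (fst c)) (rs @ [snd c])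
     in (fst c @ fst res, snd res))"

lemma compl_len: "length (fst (compl ts n rs)) = sum_list (map tsz ts)"
  by (induction ts arbitrary: n rs) (auto simp: Let_def comp_len)

lemma compl_ok:
  assumes "length vs = n" "ni \<le> n" "\<forall>i<ni. vs!i = inp!i" "length rs = k"
    "\<forall>s<k. rs!s < n \<and> vs!(rs!s) = tg!s"
    "\<forall>u<length ts. wft ni (k+u) (ts!u) \<and> ev inp (\<lambda>s. tg!s) (ts!u) = tg!(k+u)"
  shows "length (snd (compl ts n rs)) = k + length ts \<and>
    (\<forall>s < k + length ts. snd (compl ts n rs) ! s < n + length (fst (compl ts n rs)) \<and>
        run vs (fst (compl ts n rs)) ! (snd (compl ts n rs) ! s) = tg!s)"
  using assms
proof (induction ts arbitrary: n rs vs k)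
  case Nil then show ?case by auto
next
  case (Cons t ts)
  define c where "c = tcomp t n (\<lambda>s. rs ! s)"
  define vs1 where "vs1 = run vs (fst c)"
  have C: "snd c < n + length (fst c) \<and> vs1 ! snd c = ev inp (\<lambda>s. tg!s) t"
    using comp_ok[of ni k t vs n inp "\<lambda>s. rs ! s" "\<lambda>s. tg!s"] Cons.prems
    unfolding c_def vs1_def by force
  have ct: "ev inp (\<lambda>s. tg!s) t = tg ! k" using Cons.prems(6) by force
  have l1: "length vs1 = n + length (fst c)" unfolding vs1_def using Cons.prems(1) by (simp add: run_len)
  have IH: "length (snd (compl ts (n + length (fst c)) (rs @ [snd c]))) = Suc k + length ts \<and>
    (\<forall>s < Suc k + length ts. snd (compl ts (n + length (fst c)) (rs @ [snd c])) ! s < (n + length (fst c)) + length (fst (compl ts (n + length (fst c)) (rs @ [snd c]))) \<and>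
        run vs1 (fst (compl ts (n + length (fst c)) (rs @ [snd c]))) ! (snd (compl ts (n + length (fst c)) (rs @ [snd c])) ! s) = tg!s)"
  proof (rule Cons.IH)
    show "length vs1 = n + length (fst c)" by (rule l1)
    show "ni \<le> n + length (fst c)" using Cons.prems by simp
    show "\<forall>i<ni. vs1 ! i = inp ! i" unfolding vs1_def using Cons.prems by (auto simp: run_keep)
    show "length (rs @ [snd c]) = Suc k" using Cons.prems by simp
    show "\<forall>s<Suc k. (rs @ [snd c]) ! s < n + length (fst c) \<and> vs1 ! ((rs @ [snd c]) ! s) = tg ! s"
    proof (intro allI impI)
      fix s assume "s < Suc k"
      then consider "s < k" | "s = k" by linarith
      then show "(rs @ [snd c]) ! s < n + length (fst c) \<and> vs1 ! ((rs @ [snd c]) ! s) = tg ! s"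
      proof cases
        case 1 then show ?thesis unfolding vs1_def using Cons.prems by (auto simp: nth_append run_keep)
      next
        case 2 then show ?thesis using Cons.prems C ct by (auto simp: nth_append)
      qed
    qed
    show "\<forall>u<length ts. wft ni (Suc k + u) (ts ! u) \<and> ev inp (\<lambda>s. tg!s) (ts ! u) = tg ! (Suc k + u)"
      using Cons.prems(6) by force
  qed
  show ?case using IH
    by (simp add: Let_def c_def[symmetric] run_append vs1_def[symmetric] add.assoc)
qed

lemma slp_ok:
  assumes "length inp = n"
    "\<forall>u<length ts. wft n u (ts!u) \<and> ev inp (\<lambda>s. tg!s) (ts!u) = tg!u" "length ts = length tg"
  shows "slp_computes (fst (compl ts n [])) (snd (compl ts n [])) inp tg"
proof -
  have H: "length (snd (compl ts n [])) = 0 + length ts \<and>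
    (\<forall>s < 0 + length ts. snd (compl ts n []) ! s < n + length (fst (compl ts n [])) \<and>
        run inp (fst (compl ts n [])) ! (snd (compl ts n []) ! s) = tg!s)"
    by (rule compl_ok) (use assms in auto)
  show ?thesis unfolding slp_computes_def
    using H assms(1,3) by (auto simp: in_set_conv_nth list_eq_iff_nth_eq)
qed





lemma cm_len: "length (concat (map (\<lambda>i. map (F i) [0..<a]) [0..<b])) = a * b"
  by (induction b) auto

lemma cm_nth: "t < a * b \<Longrightarrow> concat (map (\<lambda>i. map (F i) [0..<a]) [0..<b]) ! t = F (t div a) (t mod a)"
proof (induction b arbitrary: t)
  case 0 then show ?case by simp
next
  case (Suc b)
  have eq: "concat (map (\<lambda>i. map (F i) [0..<a]) [0..<Suc b]) =
    concat (map (\<lambda>i. map (F i) [0..<a]) [0..<b]) @ map (F b) [0..<a]" by simp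
  have lx: "length (concat (map (\<lambda>i. map (F i) [0..<a]) [0..<b])) = a * b" by (rule cm_len)
  show ?case
  proof (cases "t < a * b")
    case True then show ?thesis unfolding eq nth_append lx using Suc.IH by simp
  next
    case False
    then have t1: "t - a*b < a" using Suc.prems by auto
    have t2: "t div a = b" using False Suc.prems
      by (metis div_nat_eqI linorder_not_le mult.commute mult_Suc_right add.commute)
    have t3: "t mod a = t - a*b" using t2
      by (metis minus_div_mult_eq_mod mult.commute)
    have "(concat (map (\<lambda>i. map (F i) [0..<a]) [0..<b]) @ map (F b) [0..<a]) ! t = map (F b) [0..<a] ! (t - a*b)"
      unfolding nth_append lx using False by simp
    also have "\<dots> = F b (t - a*b)" using t1 by simp
    finally show ?thesis unfolding eq t2 t3 .
  qed
qed


lemma cl2_eq: "coeff_list2 lx ly p = concat (map (\<lambda>i. map (\<lambda>j. coeff (coeff p i) j) [0..<lx]) [0..<ly])"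
  unfolding coeff_list2_def coeff_list_def by (simp only: eta_contract_eq)

lemma clm_eq: "concat (map (coeff_list M) ps) = concat (map (\<lambda>q. map (\<lambda>j. coeff (ps!q) j) [0..<M]) [0..<length ps])"
proof -
  have "map (coeff_list M) ps = map (\<lambda>q. coeff_list M (ps!q)) [0..<length ps]"
    by (rule nth_equalityI) auto
  then show ?thesis unfolding coeff_list_def by (simp only: eta_contract_eq)
qed
lemma cl2_len: "length (coeff_list2 lx ly p) = lx * ly"
  unfolding cl2_eq by (rule cm_len)

lemma cl2_nth: "t < lx * ly \<Longrightarrow> coeff_list2 lx ly p ! t = coeff (coeff p (t div lx)) (t mod lx)"
  unfolding cl2_eq by (rule cm_nth)

lemma clm_len: "length (concat (map (coeff_list M) ps)) = M * length ps"
  unfolding clm_eq by (rule cm_len)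

lemma clm_nth: "t < M * length ps \<Longrightarrow> concat (map (coeff_list M) ps) ! t = coeff (ps ! (t div M)) (t mod M)"
  unfolding clm_eq by (rule cm_nth)

lemma G:
  fixes e :: "nat \<Rightarrow> nat \<Rightarrow> 'a::comm_ring_1"
  assumes D: "0 < D" and L: "L \<le> 2*D" and eK: "\<And>i j. K \<le> i \<Longrightarrow> e i j = 0"
    and eL: "\<And>i j. L \<le> j \<Longrightarrow> e i j = 0"
  shows "(\<Sum>i<K. if D*i \<le> p then e i (p - D*i) else 0) =
     e (p div D) (p mod D) + (if 1 \<le> p div D then e (p div D - 1) (p mod D + D) else 0)"
proof -
  define q where "q = p div D"
  define rr where "rr = p mod D"
  have p: "p = D*q + rr" and rr: "rr < D" using D by (simp_all add: q_def rr_def)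
  define K' where "K' = K + q + 1"
  let ?g = "\<lambda>i. if D*i \<le> p then e i (p - D*i) else 0"
  have s1: "(\<Sum>i<K. ?g i) = (\<Sum>i<K'. ?g i)"
    by (rule sum.mono_neutral_left) (auto simp: K'_def eK)
  have pt: "?g i = (if q = i then e q rr else 0) + (if 1 \<le> q \<and> q - 1 = i then e (q-1) (rr + D) else 0)" for i
  proof -
    consider "i = q" | "1 \<le> q \<and> i = q - 1" | "q < i" | "i + 2 \<le> q" by linarith
    then show ?thesis
    proof cases
      case 1 then show ?thesis using p by auto
    next
      case 2
      then have "D*q = D*i + D" by (metis Suc_diff_le diff_Suc_1 mult_Suc_right add.commute le_add_diff_inverse2)
      then show ?thesis using p 2 by (auto simp: add.commute)
    next
      case 3
      then have "D*(q+1) \<le> D*i" by (intro mult_le_mono2) simp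
      then have "\<not> D*i \<le> p" using p rr by simp
      then show ?thesis using 3 by auto
    next
      case 4
      then have "D*(i+2) \<le> D*q" by (intro mult_le_mono2) simp
      then have "D*i + 2*D \<le> p" using p by simp
      then have "L \<le> p - D*i" using L by linarith
      then show ?thesis using 4 eL by auto
    qed
  qed
  have "(\<Sum>i<K'. ?g i) = e q rr + (if 1 \<le> q then e (q-1) (rr + D) else 0)"
    unfolding pt sum.distrib by (auto simp: K'_def)
  then show ?thesis using s1 q_def rr_def by simp
qed


lemma poly_lt:
  fixes p :: "'a::comm_ring_1 poly"
  assumes "\<forall>i\<ge>K. coeff p i = 0"
  shows "poly p x = (\<Sum>i<K. coeff p i * x^i)"
proof (cases "p = 0")
  case True then show ?thesis by simp
next
  case False
  then have "coeff p (degree p) \<noteq> 0" by simp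
  then have dK: "degree p < K" using assms by (meson not_less)
  have "poly p x = (\<Sum>i\<le>degree p. coeff p i * x^i)" by (rule poly_altdef)
  also have "\<dots> = (\<Sum>i<K. coeff p i * x^i)"
  proof (rule sum.mono_neutral_left)
    show "finite {..<K}" by simp
    show "{..degree p} \<subseteq> {..<K}" using dK by auto
    show "\<forall>i\<in>{..<K} - {..degree p}. coeff p i * x ^ i = 0" by (auto simp: coeff_eq_0)
  qed
  finally show ?thesis .
qed

lemma coeff_mult_monom': "coeff (c * monom a k) d = (if d < k then 0 else a * coeff c (d - k))"
  by (simp only: mult.commute[of c] coeff_monom_mult)

lemma coeff_sub_pos:
  assumes "\<forall>i\<ge>K. coeff p i = 0"
  shows "coeff (sub_pos N s p) d = (\<Sum>i<K. if N*i \<le> d then s^i * coeff (coeff p i) (d - N*i) else 0)"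
proof -
  have "sub_pos N s p = (\<Sum>i<K. coeff p i * monom (s^i) (N*i))"
    unfolding sub_pos_def poly_lt[OF assms] monom_power by (simp only: mult.commute[of N])
  then show ?thesis by (simp only: coeff_sum coeff_mult_monom') (intro sum.cong refl, simp add: not_less)
qed
lemma coeff_sub_rev:
  "coeff (sub_rev N l s p) d = (\<Sum>i<l. if N*i \<le> d then s^(l-1-i) * coeff (coeff p (l-1-i)) (d - N*i) else 0)"
proof -
  have "coeff (sub_rev N l s p) d = (\<Sum>i<l. s^i * (if N*(l-1-i) \<le> d then coeff (coeff p i) (d - N*(l-1-i)) else 0))"
    by (simp only: sub_rev_def coeff_sum coeff_smult coeff_mult_monom') (intro sum.cong refl, simp add: not_less)
  also have "\<dots> = (\<Sum>i<l. (\<lambda>j. s^j * (if N*(l-1-j) \<le> d then coeff (coeff p j) (d - N*(l-1-j)) else 0)) (l - Suc i))"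
    by (rule sum.nat_diff_reindex[symmetric])
  also have "\<dots> = (\<Sum>i<l. if N*i \<le> d then s^(l-1-i) * coeff (coeff p (l-1-i)) (d - N*i) else 0)"
  proof (intro sum.cong refl)
    fix i assume "i \<in> {..<l}"
    then obtain j where l: "l = Suc (i + j)" using less_imp_Suc_add by blast
    show "(\<lambda>j. s^j * (if N*(l-1-j) \<le> d then coeff (coeff p j) (d - N*(l-1-j)) else 0)) (l - Suc i) =
      (if N*i \<le> d then s^(l-1-i) * coeff (coeff p (l-1-i)) (d - N*i) else 0)"
      unfolding l by simp
  qed
  finally show ?thesis .
qed

lemma sum_even_odd: "(\<Sum>k<2*(n::nat). g k) = (\<Sum>m<n. g (2*m)) + (\<Sum>m<n. g (2*m+1))"
  by (induction n) (auto simp: mult_2 ac_simps)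



lemma ext_lt:
  fixes g :: "nat \<Rightarrow> 'a::comm_monoid_add"
  assumes "g (2*Ly - 1) = 0"
  shows "(\<Sum>i<2*Ly-1. g i) = (\<Sum>i<2*Ly. g i)"
proof (cases Ly)
  case 0 then show ?thesis by simp
next
  case (Suc l)
  then have e: "2*Ly = Suc (Suc (2*l))" and e2: "2*Ly - 1 = Suc (2*l)" by simp_all
  show ?thesis unfolding e e2 using assms e2 by simp
qed


lemma neg1e: "(-1::'a::ring_1)^(2*m) = 1" by (simp add: power_mult)
lemma neg1o: "(-1::'a::ring_1)^(2*m+1) = -1" by (simp add: power_mult)

lemma EO0:
  fixes Q :: "nat \<Rightarrow> nat \<Rightarrow> 'a::comm_ring_1"
  assumes QK: "\<And>i j. 2*Ly - 1 \<le> i \<Longrightarrow> Q i j = 0"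
  shows "(\<Sum>i<2*Ly-1. if N*i \<le> p then 1^i * Q i (p - N*i) else 0) + (\<Sum>i<2*Ly-1. if N*i \<le> p then (-1)^i * Q i (p - N*i) else 0)
    = 2 * (\<Sum>m<Ly. if 2*N*m \<le> p then Q (2*m) (p - 2*N*m) else 0)"
proof -
  define g where "g = (\<lambda>i. (if N*i \<le> p then 1^i * Q i (p - N*i) else 0) + (if N*i \<le> p then (-1)^i * Q i (p - N*i) else (0::'a)))"
  have "(\<Sum>i<2*Ly-1. if N*i \<le> p then 1^i * Q i (p - N*i) else 0) + (\<Sum>i<2*Ly-1. if N*i \<le> p then (-1)^i * Q i (p - N*i) else 0)
     = (\<Sum>i<2*Ly-1. g i)" unfolding g_def by (rule sum.distrib[symmetric])
  also have "\<dots> = (\<Sum>i<2*Ly. g i)"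
    by (rule ext_lt) (use QK in \<open>simp add: g_def\<close>)
  also have "\<dots> = (\<Sum>m<Ly. g (2*m)) + (\<Sum>m<Ly. g (2*m+1))" by (rule sum_even_odd)
  also have "(\<Sum>m<Ly. g (2*m+1)) = 0"
  proof (intro sum.neutral ballI)
    fix m show "g (2*m+1) = 0" unfolding g_def neg1o by simp
  qed
  also have "(\<Sum>m<Ly. g (2*m)) = (\<Sum>m<Ly. 2 * (if 2*N*m \<le> p then Q (2*m) (p - 2*N*m) else 0))"
  proof (intro sum.cong refl)
    fix m
    have e: "N*(2*m) = 2*N*m" by simp
    show "g (2*m) = 2 * (if 2*N*m \<le> p then Q (2*m) (p - 2*N*m) else 0)"
      unfolding g_def by (cases "2*N*m \<le> p") (simp_all add: e neg1e mult_2[symmetric])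
  qed
  finally show ?thesis by (simp only: sum_distrib_left add_0_right)
qed

lemma EO1:
  fixes Q :: "nat \<Rightarrow> nat \<Rightarrow> 'a::comm_ring_1"
  assumes QK: "\<And>i j. 2*Ly - 1 \<le> i \<Longrightarrow> Q i j = 0"
  shows "(\<Sum>i<2*Ly-1. if N*i \<le> p + N then 1^i * Q i (p + N - N*i) else 0) - (\<Sum>i<2*Ly-1. if N*i \<le> p + N then (-1)^i * Q i (p + N - N*i) else 0)
    = 2 * (\<Sum>m<Ly. if 2*N*m \<le> p then Q (2*m+1) (p - 2*N*m) else 0)"
proof -
  define g where "g = (\<lambda>i. (if N*i \<le> p + N then 1^i * Q i (p + N - N*i) else 0) - (if N*i \<le> p + N then (-1)^i * Q i (p + N - N*i) else (0::'a)))"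
  have "(\<Sum>i<2*Ly-1. if N*i \<le> p + N then 1^i * Q i (p + N - N*i) else 0) - (\<Sum>i<2*Ly-1. if N*i \<le> p + N then (-1)^i * Q i (p + N - N*i) else 0)
     = (\<Sum>i<2*Ly-1. g i)" unfolding g_def by (rule sum_subtractf[symmetric])
  also have "\<dots> = (\<Sum>i<2*Ly. g i)"
    by (rule ext_lt) (use QK in \<open>simp add: g_def\<close>)
  also have "\<dots> = (\<Sum>m<Ly. g (2*m)) + (\<Sum>m<Ly. g (2*m+1))" by (rule sum_even_odd)
  also have "(\<Sum>m<Ly. g (2*m)) = 0"
  proof (intro sum.neutral ballI)
    fix m show "g (2*m) = 0" unfolding g_def neg1e by simp
  qed
  also have "(\<Sum>m<Ly. g (2*m+1)) = (\<Sum>m<Ly. 2 * (if 2*N*m \<le> p then Q (2*m+1) (p - 2*N*m) else 0))"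
  proof (intro sum.cong refl)
    fix m
    have e: "N*(2*m+1) = 2*N*m + N" by (simp add: algebra_simps)
    have e2: "(2*N*m + N \<le> p + N) = (2*N*m \<le> p)" by simp
    have e3: "p + N - (2*N*m + N) = p - 2*N*m" by simp
    have e4: "N * (2 * m) = 2 * N * m" by simp
    show "g (2*m+1) = 2 * (if 2*N*m \<le> p then Q (2*m+1) (p - 2*N*m) else 0)"
      unfolding g_def by (cases "2*N*m \<le> p") (simp_all add: e e2 e3 e4 neg1o mult_2[symmetric])
  qed
  finally show ?thesis by (simp only: sum_distrib_left add_0_left)
qed




definition hm :: "nat \<Rightarrow> 'a::comm_ring_1 \<Rightarrow> 'a poly \<Rightarrow> 'a poly poly \<Rightarrow> 'a poly" where
  "hm l s b p = (\<Sum>i<l. smult (s^i) (coeff p i * b^(l-1-i)))"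

lemma smult_sum_right: "smult c (sum f A) = sum (\<lambda>x. smult c (f x)) A"
  by (induction A rule: infinite_finite_induct) (simp_all add: smult_add_right)

lemma hm_sum: "hm l s b (\<Sum>x\<in>A. F x) = (\<Sum>x\<in>A. hm l s b (F x))"
proof (cases "finite A")
  case True
  then show ?thesis
    unfolding hm_def coeff_sum sum_distrib_right smult_sum_right
    by (subst sum.swap) (rule refl)
next
  case False then show ?thesis by (simp add: hm_def)
qed

lemma hm_monom: "i < l \<Longrightarrow> hm l s b (monom c i) = smult (s^i) (c * b^(l-1-i))"
proof -
  assume i: "i < l"
  have "hm l s b (monom c i) = (\<Sum>k<l. if i = k then smult (s^k) (c * b^(l-1-k)) else 0)"
    unfolding hm_def by (intro sum.cong refl) auto
  also have "\<dots> = smult (s^i) (c * b^(l-1-i))" using i by simp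
  finally show ?thesis .
qed

lemma poly_monoms:
  fixes p :: "'a::comm_ring_1 poly poly"
  assumes "\<forall>i\<ge>l. coeff p i = 0" "1 \<le> l"
  shows "p = (\<Sum>i<l. monom (coeff p i) i)"
proof -
  have "degree p \<le> l - 1"
  proof (cases "p = 0")
    case False
    then have "coeff p (degree p) \<noteq> 0" by simp
    then have "\<not> l \<le> degree p" using assms(1) by blast
    then show ?thesis by linarith
  qed simp
  then have "p = (\<Sum>i\<le>l-1. monom (coeff p i) i)" by (rule poly_as_sum_of_monoms'[symmetric])
  also have "{..l-1} = {..<l}" using assms(2) by auto
  finally show ?thesis .
qed

lemma hm_mult:
  fixes f g :: "'a::comm_ring_1 poly poly"
  assumes f: "\<forall>i\<ge>l1. coeff f i = 0" and g: "\<forall>i\<ge>l2. coeff g i = 0" and l1: "1 \<le> l1" and l2: "1 \<le> l2"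
  shows "hm (l1 + l2 - 1) s b (f * g) = hm l1 s b f * hm l2 s b g"
proof -
  have "f * g = (\<Sum>i<l1. monom (coeff f i) i) * (\<Sum>j<l2. monom (coeff g j) j)"
    using poly_monoms[OF f l1] poly_monoms[OF g l2] by simp
  also have "\<dots> = (\<Sum>i<l1. \<Sum>j<l2. monom (coeff f i * coeff g j) (i + j))"
    by (simp add: sum_product mult_monom)
  finally have fg: "f * g = (\<Sum>i<l1. \<Sum>j<l2. monom (coeff f i * coeff g j) (i + j))" .
  have "hm (l1 + l2 - 1) s b (f * g) = (\<Sum>i<l1. \<Sum>j<l2. smult (s^(i+j)) (coeff f i * coeff g j * b^(l1 + l2 - 1 - 1 - (i+j))))"
    unfolding fg hm_sum by (intro sum.cong refl, subst hm_monom) auto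
  also have "\<dots> = (\<Sum>i<l1. \<Sum>j<l2. smult (s^i) (coeff f i * b^(l1-1-i)) * smult (s^j) (coeff g j * b^(l2-1-j)))"
  proof (rule sum.cong[OF refl])
    fix i assume i: "i \<in> {..<l1}"
    show "(\<Sum>j<l2. smult (s^(i+j)) (coeff f i * coeff g j * b^(l1 + l2 - 1 - 1 - (i+j)))) =
      (\<Sum>j<l2. smult (s^i) (coeff f i * b^(l1-1-i)) * smult (s^j) (coeff g j * b^(l2-1-j)))"
    proof (rule sum.cong[OF refl])
      fix j assume j: "j \<in> {..<l2}"
      have e: "l1 + l2 - 1 - 1 - (i+j) = (l1-1-i) + (l2-1-j)" using i j by auto
      show "smult (s^(i+j)) (coeff f i * coeff g j * b^(l1 + l2 - 1 - 1 - (i+j))) =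
        smult (s^i) (coeff f i * b^(l1-1-i)) * smult (s^j) (coeff g j * b^(l2-1-j))"
        unfolding e by (simp add: power_add ac_simps)
    qed
  qed
  also have "\<dots> = hm l1 s b f * hm l2 s b g"
    unfolding hm_def by (simp add: sum_product)
  finally show ?thesis .
qed

lemma sub_rev_hm: "sub_rev N l s p = hm l s (monom 1 N) p"
  unfolding sub_rev_def hm_def by (simp add: monom_power mult.commute)

lemma prod_len:
  fixes f g :: "'a::comm_ring_1 poly poly"
  assumes f: "has_len2 Lx Ly f" and g: "has_len2 Lx Ly g"
  shows "has_len2 (2*Lx-1) (2*Ly-1) (f*g)"
  unfolding has_len2_def
proof (intro conjI allI impI)
  fix k assume k: "2*Ly-1 \<le> k"
  show "coeff (f*g) k = 0" unfolding coeff_mult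
  proof (intro sum.neutral ballI)
    fix i assume "i \<in> {..k}"
    then show "coeff f i * coeff g (k - i) = 0"
      using f g k unfolding has_len2_def by (cases "Ly \<le> i") auto
  qed
next
  fix k j assume j: "2*Lx-1 \<le> j"
  show "coeff (coeff (f*g) k) j = 0" unfolding coeff_mult[of f g k] coeff_sum
  proof (intro sum.neutral ballI)
    fix i assume "i \<in> {..k}"
    show "coeff (coeff f i * coeff g (k - i)) j = 0" unfolding coeff_mult[of "coeff f i"]
    proof (intro sum.neutral ballI)
      fix u assume "u \<in> {..j}"
      then show "coeff (coeff f i) u * coeff (coeff g (k - i)) (j - u) = 0"
        using f g j unfolding has_len2_def by (cases "Lx \<le> u") auto
    qed
  qed
qed

lemma len_pos:
  fixes P :: "'a::comm_ring_1 poly poly"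
  assumes P: "has_len2 Lx Ly P" and M: "N*(Ly-1) + Lx \<le> M"
  shows "has_len M (sub_pos N s P)"
  unfolding has_len_def
proof (intro allI impI)
  fix d assume d: "M \<le> d"
  have PK: "\<forall>i\<ge>Ly. coeff P i = 0" using P unfolding has_len2_def by auto
  show "coeff (sub_pos N s P) d = 0" unfolding coeff_sub_pos[OF PK]
  proof (intro sum.neutral ballI)
    fix i assume "i \<in> {..<Ly}"
    then have "N*i \<le> N*(Ly-1)" by (intro mult_le_mono2) auto
    then have "Lx \<le> d - N*i" using d M by linarith
    then show "(if N*i \<le> d then s^i * coeff (coeff P i) (d - N*i) else 0) = 0"
      using P unfolding has_len2_def by auto
  qed
qed

lemma len_rev:
  fixes P :: "'a::comm_ring_1 poly poly"
  assumes P: "has_len2 Lx Ly P" and M: "N*(Ly-1) + Lx \<le> M"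
  shows "has_len M (sub_rev N Ly s P)"
  unfolding has_len_def
proof (intro allI impI)
  fix d assume d: "M \<le> d"
  show "coeff (sub_rev N Ly s P) d = 0" unfolding coeff_sub_rev
  proof (intro sum.neutral ballI)
    fix i assume "i \<in> {..<Ly}"
    then have "N*i \<le> N*(Ly-1)" by (intro mult_le_mono2) auto
    then have "Lx \<le> d - N*i" using d M by linarith
    then show "(if N*i \<le> d then s^(Ly-1-i) * coeff (coeff P (Ly-1-i)) (d - N*i) else 0) = 0"
      using P unfolding has_len2_def by auto
  qed
qed




definition cF :: "nat \<Rightarrow> nat \<Rightarrow> nat \<Rightarrow> nat \<Rightarrow> nat \<Rightarrow> tm" where
  "cF Lx Ly b i j = (if i < Ly \<and> j < Lx then TInp (b + i*Lx + j) else TZero)"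

definition sg :: "bool \<Rightarrow> tm \<Rightarrow> tm" where
  "sg ng x = (if ng then TSub TZero x else x)"

definition eT :: "nat \<Rightarrow> nat \<Rightarrow> nat \<Rightarrow> bool \<Rightarrow> bool \<Rightarrow> nat \<Rightarrow> nat \<Rightarrow> tm" where
  "eT Lx Ly b ng rv i j = (if rv then (if i < Ly then sg (ng \<and> odd (Ly-1-i)) (cF Lx Ly b (Ly-1-i) j) else TZero)
     else sg (ng \<and> odd i) (cF Lx Ly b i j))"

definition t1 :: "nat \<Rightarrow> nat \<Rightarrow> nat \<Rightarrow> tm" where
  "t1 Lx Ly u = (let N = (Lx+1) div 2; M = N*(Ly-1)+Lx; q = u div M; p = u mod M;
     b = (if q < 4 then 0 else Lx*Ly); ng = odd q; rv = (2 \<le> q mod 4); i1 = p div N; j1 = p mod N in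
   TAdd (eT Lx Ly b ng rv i1 j1) (if 1 \<le> i1 then eT Lx Ly b ng rv (i1-1) (j1+N) else TZero))"

definition eF :: "nat \<Rightarrow> 'a::comm_ring_1 poly poly \<Rightarrow> bool \<Rightarrow> bool \<Rightarrow> nat \<Rightarrow> nat \<Rightarrow> 'a" where
  "eF Ly P ng rv i j = (if rv then (if i < Ly then (if ng \<and> odd (Ly-1-i) then - coeff (coeff P (Ly-1-i)) j else coeff (coeff P (Ly-1-i)) j) else 0)
     else (if ng \<and> odd i then - coeff (coeff P i) j else coeff (coeff P i) j))"

lemma tsz_cF: "tsz (cF Lx Ly b i j) \<le> 1" by (simp add: cF_def)
lemma tsz_sg: "tsz (sg ng x) \<le> 2 + tsz x" by (simp add: sg_def)
lemma tsz_eT: "tsz (eT Lx Ly b ng rv i j) \<le> 3"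
  using tsz_sg tsz_cF unfolding eT_def by (simp add: sg_def cF_def)
lemma tsz_t1: "tsz (t1 Lx Ly u) \<le> 7"
proof -
  have "tsz (TAdd (eT Lx Ly b ng rv i j) (if c then eT Lx Ly b ng rv i' j' else TZero)) \<le> 7" for b ng rv i j c i' j'
    using tsz_eT[of Lx Ly b ng rv i j] tsz_eT[of Lx Ly b ng rv i' j'] by auto
  then show ?thesis unfolding t1_def Let_def by blast
qed

lemma wft_cF: "Lx * Ly + b \<le> ni \<Longrightarrow> wft ni no (cF Lx Ly b i j)"
proof -
  assume a: "Lx * Ly + b \<le> ni"
  { assume i: "i < Ly" and j: "j < Lx"
    have "i*Lx + j < (i+1)*Lx" using j by simp
    also have "\<dots> \<le> Ly*Lx" using i by (intro mult_le_mono1) simp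
    finally have "b + i*Lx + j < ni" using a by (simp add: mult.commute) }
  then show ?thesis unfolding cF_def by auto
qed

lemma wft_eT: "Lx * Ly + b \<le> ni \<Longrightarrow> wft ni no (eT Lx Ly b ng rv i j)"
  using wft_cF unfolding eT_def sg_def by auto

lemma ev_cF:
  fixes f g :: "'a::comm_ring_1 poly poly"
  assumes f: "has_len2 Lx Ly f" and g: "has_len2 Lx Ly g"
  shows "ev (coeff_list2 Lx Ly f @ coeff_list2 Lx Ly g) w (cF Lx Ly (if c then 0 else Lx*Ly) i j)
    = coeff (coeff (if c then f else g) i) j"
proof (cases "i < Ly \<and> j < Lx")
  case True
  have "i*Lx + j < (i+1)*Lx" using True by simp
  also have "\<dots> \<le> Ly*Lx" using True by (intro mult_le_mono1) simp
  finally have lt: "i*Lx + j < Lx*Ly" by (simp add: mult.commute)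
  have dm: "(i*Lx + j) div Lx = i" "(i*Lx + j) mod Lx = j" using True by auto
  show ?thesis
  proof (cases c)
    case True
    then show ?thesis using lt dm \<open>i < Ly \<and> j < Lx\<close>
      by (simp add: cF_def nth_append cl2_len cl2_nth)
  next
    case False
    then show ?thesis using lt dm \<open>i < Ly \<and> j < Lx\<close>
      by (simp add: cF_def nth_append cl2_len cl2_nth add.assoc)
  qed
next
  case False
  then show ?thesis using f g unfolding cF_def has_len2_def by auto
qed

lemma ev_eT:
  fixes f g :: "'a::comm_ring_1 poly poly"
  assumes f: "has_len2 Lx Ly f" and g: "has_len2 Lx Ly g"
  shows "ev (coeff_list2 Lx Ly f @ coeff_list2 Lx Ly g) w (eT Lx Ly (if c then 0 else Lx*Ly) ng rv i j)
    = eF Ly (if c then f else g) ng rv i j"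
  unfolding eT_def eF_def sg_def using ev_cF[OF f g] by auto

lemma sign_pow: "(if ng then -1 else 1::'a::comm_ring_1)^i * x = (if ng \<and> odd i then - x else x)"
  by (auto simp: minus_one_power_iff)

lemma eF_pos_sum:
  fixes P :: "'a::comm_ring_1 poly poly"
  assumes P: "has_len2 Lx Ly P" and N: "0 < N" "Lx \<le> 2*N"
  shows "coeff (sub_pos N (if ng then -1 else 1) P) p =
    eF Ly P ng False (p div N) (p mod N) + (if 1 \<le> p div N then eF Ly P ng False (p div N - 1) (p mod N + N) else 0)"
proof -
  have PK: "\<forall>i\<ge>Ly. coeff P i = 0" using P unfolding has_len2_def by auto
  have "coeff (sub_pos N (if ng then -1 else 1) P) p = (\<Sum>i<Ly. if N*i \<le> p then eF Ly P ng False i (p - N*i) else 0)"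
    unfolding coeff_sub_pos[OF PK] sign_pow by (intro sum.cong refl) (simp add: eF_def)
  also have "\<dots> = eF Ly P ng False (p div N) (p mod N) + (if 1 \<le> p div N then eF Ly P ng False (p div N - 1) (p mod N + N) else 0)"
    by (rule G[OF N]) (use P in \<open>auto simp: eF_def has_len2_def\<close>)
  finally show ?thesis .
qed

lemma eF_rev_sum:
  fixes P :: "'a::comm_ring_1 poly poly"
  assumes P: "has_len2 Lx Ly P" and N: "0 < N" "Lx \<le> 2*N"
  shows "coeff (sub_rev N Ly (if ng then -1 else 1) P) p =
    eF Ly P ng True (p div N) (p mod N) + (if 1 \<le> p div N then eF Ly P ng True (p div N - 1) (p mod N + N) else 0)"
proof -
  have "coeff (sub_rev N Ly (if ng then -1 else 1) P) p = (\<Sum>i<Ly. if N*i \<le> p then eF Ly P ng True i (p - N*i) else 0)"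
    unfolding coeff_sub_rev eF_def sign_pow by (intro sum.cong refl) auto
  also have "\<dots> = eF Ly P ng True (p div N) (p mod N) + (if 1 \<le> p div N then eF Ly P ng True (p div N - 1) (p mod N + N) else 0)"
    by (rule G[OF N]) (use P in \<open>auto simp: eF_def has_len2_def\<close>)
  finally show ?thesis .
qed


lemma pol_nth:
  assumes "q < 8"
  shows "[sub_pos N 1 f, sub_pos N (-1) f, sub_rev N Ly 1 f, sub_rev N Ly (-1) f,
          sub_pos N 1 g, sub_pos N (-1) g, sub_rev N Ly 1 g, sub_rev N Ly (-1) g] ! q =
    (if 2 \<le> q mod 4 then sub_rev N Ly (if odd q then -1 else 1) (if q < 4 then f else g)
     else sub_pos N (if odd q then -1 else 1) (if q < 4 then f else g))"
proof -
  have "q = 0 \<or> q = 1 \<or> q = 2 \<or> q = 3 \<or> q = 4 \<or> q = 5 \<or> q = 6 \<or> q = 7" using assms by auto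
  then show ?thesis by auto
qed

lemma sum_le_len: "(\<forall>x\<in>set xs. f x \<le> c) \<Longrightarrow> sum_list (map f xs) \<le> c * length xs"
  by (induction xs) auto

lemma P1_ok:
  fixes f g :: "'a::comm_ring_1 poly poly"
  assumes Lx: "1 \<le> Lx" and Ly: "1 \<le> Ly" and f: "has_len2 Lx Ly f" and g: "has_len2 Lx Ly g"
    and N: "N = (Lx+1) div 2" and M: "M = N*(Ly-1)+Lx"
  shows "slp_computes (fst (compl (map (t1 Lx Ly) [0..<8*M]) (2*Lx*Ly) [])) (snd (compl (map (t1 Lx Ly) [0..<8*M]) (2*Lx*Ly) []))
     (coeff_list2 Lx Ly f @ coeff_list2 Lx Ly g)
     (concat (map (coeff_list M) [sub_pos N 1 f, sub_pos N (-1) f, sub_rev N Ly 1 f, sub_rev N Ly (-1) f,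
          sub_pos N 1 g, sub_pos N (-1) g, sub_rev N Ly 1 g, sub_rev N Ly (-1) g]))"
    (is "slp_computes _ _ ?inp ?tg")
proof (rule slp_ok)
  have N0: "0 < N" and N2: "Lx \<le> 2*N" using Lx N by auto
  have M0: "0 < M" using M Lx by simp
  show "length ?inp = 2*Lx*Ly" by (simp add: cl2_len)
  show "length (map (t1 Lx Ly) [0..<8*M]) = length ?tg" by (simp add: coeff_list_def)
  show "\<forall>u<length (map (t1 Lx Ly) [0..<8*M]). wft (2*Lx*Ly) u (map (t1 Lx Ly) [0..<8*M] ! u) \<and>
      ev ?inp (\<lambda>s. ?tg ! s) (map (t1 Lx Ly) [0..<8*M] ! u) = ?tg ! u"
  proof (intro allI impI)
    fix u assume "u < length (map (t1 Lx Ly) [0..<8*M])"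
    then have u: "u < 8*M" by simp
    define q where "q = u div M"
    define p where "p = u mod M"
    define c where "c = (q < 4)"
    define ng where "ng = odd q"
    define rv where "rv = (2 \<le> q mod 4)"
    define P where "P = (if c then f else g)"
    have q8: "q < 8" using u M0 unfolding q_def by (simp add: less_mult_imp_div_less mult.commute)
    have P: "has_len2 Lx Ly P" using f g P_def by auto
    have t1u: "t1 Lx Ly u = TAdd (eT Lx Ly (if c then 0 else Lx*Ly) ng rv (p div N) (p mod N))
        (if 1 \<le> p div N then eT Lx Ly (if c then 0 else Lx*Ly) ng rv (p div N - 1) (p mod N + N) else TZero)"
      unfolding t1_def Let_def N[symmetric] M[symmetric] q_def[symmetric] p_def[symmetric] c_def ng_def rv_def by simp
    have wf: "wft (2*Lx*Ly) u (t1 Lx Ly u)"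
      unfolding t1u using wft_eT[of Lx Ly "if c then 0 else Lx*Ly" "2*Lx*Ly"] by auto
    have ev1: "ev ?inp (\<lambda>s. ?tg ! s) (t1 Lx Ly u) =
      eF Ly P ng rv (p div N) (p mod N) + (if 1 \<le> p div N then eF Ly P ng rv (p div N - 1) (p mod N + N) else 0)"
      unfolding t1u P_def using ev_eT[OF f g] by simp
    let ?L = "[sub_pos N 1 f, sub_pos N (-1) f, sub_rev N Ly 1 f, sub_rev N Ly (-1) f,
          sub_pos N 1 g, sub_pos N (-1) g, sub_rev N Ly 1 g, sub_rev N Ly (-1) g]"
    have "?tg ! u = coeff (?L ! q) p" unfolding q_def p_def
      by (rule clm_nth) (use u in \<open>simp add: mult.commute\<close>)
    also have "?L ! q = (if rv then sub_rev N Ly (if ng then -1 else 1) P else sub_pos N (if ng then -1 else 1) P)"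
      unfolding pol_nth[OF q8] rv_def ng_def P_def c_def by (rule refl)
    finally have tgu: "?tg ! u = coeff (if rv then sub_rev N Ly (if ng then -1 else 1) P else sub_pos N (if ng then -1 else 1) P) p" .
    have "?tg ! u = ev ?inp (\<lambda>s. ?tg ! s) (t1 Lx Ly u)"
      unfolding tgu ev1 using eF_pos_sum[OF P N0 N2] eF_rev_sum[OF P N0 N2] by (cases rv) auto
    then show "wft (2*Lx*Ly) u (map (t1 Lx Ly) [0..<8*M] ! u) \<and>
      ev ?inp (\<lambda>s. ?tg ! s) (map (t1 Lx Ly) [0..<8*M] ! u) = ?tg ! u"
      using wf u by simp
  qed
qed




definition t2 :: "nat \<Rightarrow> nat \<Rightarrow> nat \<Rightarrow> tm" where
  "t2 Lx Ly u = (let N = (Lx+1) div 2; M = N*(Ly-1)+Lx; W = 2*Lx-1; K2 = 2*Ly-1; Z = 2*M-1;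
     k = u div W; j = u mod W; opr = (if even k then TAdd else TSub) in
   if j < 2*N then TSub (THalf (opr (TInp (0*Z + (N*k + j))) (TInp (1*Z + (N*k + j)))))
       (if 2 \<le> k \<and> j + 2*N < W then TOut ((k-2)*W + (j+2*N)) else TZero)
   else TSub (THalf (opr (TInp (2*Z + (N*(K2-1-k) + j))) (TInp (3*Z + (N*(K2-1-k) + j)))))
       (if 2 \<le> k then TOut ((k-2)*W + (j-2*N)) else TZero))"

lemma tsz_t2: "tsz (t2 Lx Ly u) \<le> 4"
  unfolding t2_def Let_def by auto

lemma half2:
  assumes inj2: "inj (\<lambda>r::'a::comm_ring_1. 2 * r)"
  shows "half (2 * x) = (x::'a)"
  unfolding half_def
proof (rule the_equality)
  show "2 * x = 2 * x" ..
  fix s assume "2 * s = 2 * x" then show "s = x" using inj2 by (simp add: inj_def)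
qed

lemma dm_div: "j < D \<Longrightarrow> (D*m + j) div D = (m::nat)"
  by (simp add: add.commute[of "D*m"])
lemma dm_mod: "j < D \<Longrightarrow> (D*m + j) mod D = (j::nat)"
  by (simp add: add.commute[of "D*m"])

lemma REC0:
  fixes Q :: "nat \<Rightarrow> nat \<Rightarrow> 'a::comm_ring_1"
  assumes inj2: "inj (\<lambda>r::'a. 2 * r)"
    and QK: "\<And>i j. 2*Ly - 1 \<le> i \<Longrightarrow> Q i j = 0" and QW: "\<And>i j. W \<le> j \<Longrightarrow> Q i j = 0"
    and N: "0 < N" and W: "W \<le> 4*N"
  shows "half ((\<Sum>i<2*Ly-1. if N*i \<le> p then 1^i * Q i (p - N*i) else 0) + (\<Sum>i<2*Ly-1. if N*i \<le> p then (-1)^i * Q i (p - N*i) else 0))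
    = Q (2*(p div (2*N))) (p mod (2*N)) + (if 1 \<le> p div (2*N) then Q (2*(p div (2*N) - 1)) (p mod (2*N) + 2*N) else 0)"
proof -
  have "(\<Sum>m<Ly. if 2*N*m \<le> p then Q (2*m) (p - 2*N*m) else 0) =
     Q (2*(p div (2*N))) (p mod (2*N)) + (if 1 \<le> p div (2*N) then Q (2*(p div (2*N) - 1)) (p mod (2*N) + 2*N) else 0)"
    by (rule G[where L=W and e="\<lambda>m j. Q (2*m) j"]) (use N W QK QW in auto)
  moreover have "(\<Sum>i<2*Ly-1. if N*i \<le> p then 1^i * Q i (p - N*i) else 0) + (\<Sum>i<2*Ly-1. if N*i \<le> p then (-1)^i * Q i (p - N*i) else 0)
    = 2 * (\<Sum>m<Ly. if 2*N*m \<le> p then Q (2*m) (p - 2*N*m) else 0)" by (rule EO0) (rule QK)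
  ultimately show ?thesis by (simp only: half2[OF inj2])
qed

lemma REC1:
  fixes Q :: "nat \<Rightarrow> nat \<Rightarrow> 'a::comm_ring_1"
  assumes inj2: "inj (\<lambda>r::'a. 2 * r)"
    and QK: "\<And>i j. 2*Ly - 1 \<le> i \<Longrightarrow> Q i j = 0" and QW: "\<And>i j. W \<le> j \<Longrightarrow> Q i j = 0"
    and N: "0 < N" and W: "W \<le> 4*N"
  shows "half ((\<Sum>i<2*Ly-1. if N*i \<le> p + N then 1^i * Q i (p + N - N*i) else 0) - (\<Sum>i<2*Ly-1. if N*i \<le> p + N then (-1)^i * Q i (p + N - N*i) else 0))
    = Q (2*(p div (2*N)) + 1) (p mod (2*N)) + (if 1 \<le> p div (2*N) then Q (2*(p div (2*N) - 1) + 1) (p mod (2*N) + 2*N) else 0)"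
proof -
  have "(\<Sum>m<Ly. if 2*N*m \<le> p then Q (2*m+1) (p - 2*N*m) else 0) =
     Q (2*(p div (2*N)) + 1) (p mod (2*N)) + (if 1 \<le> p div (2*N) then Q (2*(p div (2*N) - 1) + 1) (p mod (2*N) + 2*N) else 0)"
    by (rule G[where L=W and e="\<lambda>m j. Q (2*m+1) j"]) (use N W QK QW in auto)
  moreover have "(\<Sum>i<2*Ly-1. if N*i \<le> p + N then 1^i * Q i (p + N - N*i) else 0) - (\<Sum>i<2*Ly-1. if N*i \<le> p + N then (-1)^i * Q i (p + N - N*i) else 0)
    = 2 * (\<Sum>m<Ly. if 2*N*m \<le> p then Q (2*m+1) (p - 2*N*m) else 0)" by (rule EO1) (rule QK)
  ultimately show ?thesis by (simp only: half2[OF inj2])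
qed


lemma hr_eq:
  fixes h :: "'a::comm_ring_1 poly poly"
  assumes s: "s = 1 \<or> s = -1"
  shows "coeff (sub_rev N (2*Ly-1) s h) x = (\<Sum>i<2*Ly-1. if N*i \<le> x then s^i *
     (\<lambda>i j. if i < 2*Ly-1 then coeff (coeff h (2*Ly-1-1-i)) j else 0) i (x - N*i) else 0)"
  unfolding coeff_sub_rev
proof (intro sum.cong refl)
  fix i assume i: "i \<in> {..<2*Ly-1}"
  have "2*Ly-1-1-i + i = 2*(Ly-1)" using i by auto
  then have ev: "even (2*Ly-1-1-i) = even i" by (metis even_add even_mult_iff even_numeral)
  have m: "(-1::'a)^(2*Ly-1-1-i) = (-1)^i" unfolding minus_one_power_iff ev by (rule refl)
  have "s^(2*Ly-1-1-i) = s^i" using s m by auto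
  then show "(if N*i \<le> x then s^(2*Ly-1-1-i) * coeff (coeff h (2*Ly-1-1-i)) (x - N*i) else 0) =
    (if N*i \<le> x then s^i * (\<lambda>i j. if i < 2*Ly-1 then coeff (coeff h (2*Ly-1-1-i)) j else 0) i (x - N*i) else 0)"
    using i by simp
qed


lemma ev_add: "ev inp w (TSub (THalf (TAdd (TInp a) (TInp b))) Y) = half (inp!a + inp!b) - ev inp w Y" by simp
lemma ev_sub: "ev inp w (TSub (THalf (TSub (TInp a) (TInp b))) Y) = half (inp!a - inp!b) - ev inp w Y" by simp
lemma ev_Y: "ev inp w (if c then TOut s else TZero) = (if c then w s else 0)" by simp

lemma P2_ok:
  fixes h :: "'a::comm_ring_1 poly poly"
  assumes inj2: "inj (\<lambda>r::'a. 2 * r)" and Lx: "1 \<le> Lx" and Ly: "1 \<le> Ly"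
    and hl: "has_len2 (2*Lx-1) (2*Ly-1) h"
    and N: "N = (Lx+1) div 2" and M: "M = N*(Ly-1)+Lx"
  shows "slp_computes (fst (compl (map (t2 Lx Ly) [0..<(2*Lx-1)*(2*Ly-1)]) (4*(2*M-1)) []))
      (snd (compl (map (t2 Lx Ly) [0..<(2*Lx-1)*(2*Ly-1)]) (4*(2*M-1)) []))
      (concat (map (coeff_list (2*M-1)) [sub_pos N 1 h, sub_pos N (-1) h, sub_rev N (2*Ly-1) 1 h, sub_rev N (2*Ly-1) (-1) h]))
      (coeff_list2 (2*Lx-1) (2*Ly-1) h)"
    (is "slp_computes _ _ ?inp ?tg")
proof (rule slp_ok)
  define W where "W = 2*Lx-1"
  define K2 where "K2 = 2*Ly-1"
  define Z where "Z = 2*M-1"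
  define H where "H = (\<lambda>i j. coeff (coeff h i) j)"
  define Qr where "Qr = (\<lambda>i j. if i < 2*Ly-1 then coeff (coeff h (2*Ly-1-1-i)) j else 0)"
  let ?L = "[sub_pos N 1 h, sub_pos N (-1) h, sub_rev N (2*Ly-1) 1 h, sub_rev N (2*Ly-1) (-1) h]"
  have N0: "0 < N" and N2: "Lx \<le> 2*N" and NL: "N \<le> Lx" using Lx N by auto
  have W4: "W \<le> 4*N" using N2 W_def by simp
  have W0: "0 < W" using Lx W_def by simp
  have Zv: "Z = 2*N*(Ly-1) + 2*Lx - 1" using M Z_def Lx by simp
  have hK: "\<forall>i\<ge>2*Ly-1. coeff h i = 0" using hl unfolding has_len2_def by auto
  have HK: "\<And>i j. 2*Ly-1 \<le> i \<Longrightarrow> H i j = 0" using hK H_def by auto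
  have HW: "\<And>i j. W \<le> j \<Longrightarrow> H i j = 0" using hl unfolding has_len2_def H_def W_def by auto
  have QK: "\<And>i j. 2*Ly-1 \<le> i \<Longrightarrow> Qr i j = 0" using Qr_def by auto
  have hr1: "coeff (sub_rev N (2*Ly-1) 1 h) x = (\<Sum>i<2*Ly-1. if N*i \<le> x then 1^i * Qr i (x - N*i) else 0)" for x
    unfolding Qr_def by (rule hr_eq) simp
  have hrm: "coeff (sub_rev N (2*Ly-1) (-1) h) x = (\<Sum>i<2*Ly-1. if N*i \<le> x then (-1)^i * Qr i (x - N*i) else 0)" for x
    unfolding Qr_def by (rule hr_eq) simp
  have QW: "\<And>i j. W \<le> j \<Longrightarrow> Qr i j = 0" using hl unfolding has_len2_def Qr_def W_def by auto
  have inpn: "?inp ! (q*Z + x) = coeff (?L ! q) x" if "q < 4" "x < Z" for q x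
  proof -
    have e: "?inp = concat (map (coeff_list Z) ?L)" unfolding Z_def ..
    have "?inp ! (q*Z + x) = coeff (?L ! ((q*Z + x) div Z)) ((q*Z + x) mod Z)"
    proof -
      have "q*Z \<le> 3*Z" using that by (intro mult_le_mono1) simp
      then have "q*Z + x < 4*Z" using that by linarith
      moreover have "Z * length ?L = 4*Z" by simp
      ultimately have "q*Z + x < Z * length ?L" by simp
      then show ?thesis unfolding e by (rule clm_nth)
    qed
    also have "(q*Z + x) div Z = q" using dm_div[of x Z q] that by (simp add: mult.commute)
    also have "(q*Z + x) mod Z = x" using dm_mod[of x Z q] that by (simp add: mult.commute)
    finally show ?thesis .
  qed
  have tgn: "?tg ! s = H (s div W) (s mod W)" if "s < W*K2" for s
    using cl2_nth[of s W K2 h] that unfolding W_def K2_def H_def by simp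
  show "length ?inp = 4*(2*M-1)" by (simp add: coeff_list_def)
  show "length (map (t2 Lx Ly) [0..<(2*Lx-1)*(2*Ly-1)]) = length ?tg" by (simp add: cl2_len)
  show "\<forall>u<length (map (t2 Lx Ly) [0..<(2*Lx-1)*(2*Ly-1)]). wft (4*(2*M-1)) u (map (t2 Lx Ly) [0..<(2*Lx-1)*(2*Ly-1)] ! u) \<and>
      ev ?inp (\<lambda>s. ?tg ! s) (map (t2 Lx Ly) [0..<(2*Lx-1)*(2*Ly-1)] ! u) = ?tg ! u"
  proof (intro allI impI)
    fix u assume "u < length (map (t2 Lx Ly) [0..<(2*Lx-1)*(2*Ly-1)])"
    then have u: "u < W*K2" unfolding W_def K2_def by simp
    define k where "k = u div W"
    define j where "j = u mod W"
    have kK: "k < K2" using u W0 unfolding k_def by (simp add: less_mult_imp_div_less mult.commute)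
    have jW: "j < W" using W0 unfolding j_def by simp
    have uk: "u = k*W + j" unfolding k_def j_def by simp
    have tgu: "?tg ! u = H k j" using tgn[OF u] k_def j_def by simp
    have tgo: "?tg ! ((k-2)*W + jj) = H (k-2) jj" if "jj < W" "2 \<le> k" for jj
    proof -
      have lt: "(k-2)*W + jj < W*K2"
      proof -
        have "(k-2)*W + jj < (k-2)*W + W" using that by simp
        also have "\<dots> = (k-1)*W" using that by (simp add: algebra_simps)
        also have "\<dots> \<le> K2*W" using kK by (intro mult_le_mono1) simp
        finally show ?thesis by (simp add: mult.commute)
      qed
      have "((k-2)*W + jj) div W = k-2" using dm_div[of jj W "k-2"] that by (simp add: mult.commute)
      moreover have "((k-2)*W + jj) mod W = jj" using dm_mod[of jj W "k-2"] that by (simp add: mult.commute)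
      ultimately show ?thesis using tgn[OF lt] by simp
    qed
    have Nk: "N*kk + jj < Z" if "kk < K2" "jj < W" for kk jj
    proof -
      have "N*kk \<le> N*(2*(Ly-1))" using that K2_def by (intro mult_le_mono2) simp
      then show ?thesis using that Zv W_def by (simp add: algebra_simps)
    qed
    have t2u: "t2 Lx Ly u = (if j < 2*N then TSub (THalf ((if even k then TAdd else TSub) (TInp (0*Z + (N*k + j))) (TInp (1*Z + (N*k + j)))))
       (if 2 \<le> k \<and> j + 2*N < W then TOut ((k-2)*W + (j+2*N)) else TZero)
     else TSub (THalf ((if even k then TAdd else TSub) (TInp (2*Z + (N*(K2-1-k) + j))) (TInp (3*Z + (N*(K2-1-k) + j)))))
       (if 2 \<le> k then TOut ((k-2)*W + (j-2*N)) else TZero))"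
      unfolding t2_def Let_def N[symmetric] M[symmetric] W_def[symmetric] K2_def[symmetric] Z_def[symmetric]
        k_def[symmetric] j_def[symmetric] by (rule refl)
    show "wft (4*(2*M-1)) u (map (t2 Lx Ly) [0..<(2*Lx-1)*(2*Ly-1)] ! u) \<and>
      ev ?inp (\<lambda>s. ?tg ! s) (map (t2 Lx Ly) [0..<(2*Lx-1)*(2*Ly-1)] ! u) = ?tg ! u"
    proof -
      have mu: "map (t2 Lx Ly) [0..<(2*Lx-1)*(2*Ly-1)] ! u = t2 Lx Ly u" using u W_def K2_def by simp
      have ZZ: "4*(2*M-1) = 4*Z" using Z_def by simp
      show ?thesis
      proof (cases "j < 2*N")
        case True
        define m0 where "m0 = k div 2"
        define p' where "p' = 2*N*m0 + j"
        have pd: "p' div (2*N) = m0" using dm_div[of j "2*N" m0] True p'_def by simp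
        have pm: "p' mod (2*N) = j" using dm_mod[of j "2*N" m0] True p'_def by simp
        have x: "N*k + j < Z" by (rule Nk[OF kK jW])
        have i0: "?inp ! (0*Z + (N*k + j)) = coeff (sub_pos N 1 h) (N*k + j)" using inpn[of 0 "N*k+j"] x by simp
        have i1: "?inp ! (1*Z + (N*k + j)) = coeff (sub_pos N (-1) h) (N*k + j)" using inpn[of 1 "N*k+j"] x by simp
        have wf: "wft (4*Z) u (t2 Lx Ly u)"
        proof -
          have "(k-2)*W + (j+2*N) < u" if "2 \<le> k" "j + 2*N < W"
          proof -
            have "(k-2)*W + (j+2*N) < (k-2)*W + W" using that by simp
            also have "\<dots> \<le> k*W" using that by (simp add: algebra_simps)
            finally show ?thesis using uk by simp
          qed
          then show ?thesis unfolding t2u using True x by auto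
        qed
        have Y: "(if 2 \<le> k \<and> j + 2*N < W then ?tg ! ((k-2)*W + (j+2*N)) else 0) =
            (if 1 \<le> m0 then H (k-2) (j + 2*N) else 0)"
          using tgo[of "j+2*N"] HW[of "j+2*N" "k-2"] m0_def by auto
        have ev: "ev ?inp (\<lambda>s. ?tg ! s) (t2 Lx Ly u) = H k j"
        proof (cases "even k")
          case True
          then have kx: "N*k + j = p'" unfolding p'_def m0_def by (auto elim!: evenE)
          have R: "half (coeff (sub_pos N 1 h) p' + coeff (sub_pos N (-1) h) p') =
              H (2*m0) j + (if 1 \<le> m0 then H (2*(m0-1)) (j + 2*N) else 0)"
            using REC0[where Q="\<lambda>i j. coeff (coeff h i) j" and Ly=Ly and W=W and N=N and p=p', OF inj2 HK[unfolded H_def] HW[unfolded H_def] N0 W4] unfolding coeff_sub_pos[OF hK] pd pm H_def by simp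
          have e1: "2*m0 = k" and e2: "2*(m0-1) = k-2" using True m0_def by auto
          have "ev ?inp (\<lambda>s. ?tg ! s) (t2 Lx Ly u) = half (?inp!(0*Z+(N*k+j)) + ?inp!(1*Z+(N*k+j))) -
             (if 2 \<le> k \<and> j + 2*N < W then ?tg!((k-2)*W + (j+2*N)) else 0)"
            unfolding t2u if_P[OF \<open>j < 2*N\<close>] if_P[OF True] ev_add ev_Y by (rule refl)
          also have "\<dots> = H k j" unfolding i0 i1 unfolding kx Y R e1 e2 by simp
          finally show ?thesis .
        next
          case False
          then have kx: "N*k + j = p' + N" unfolding p'_def m0_def by (auto elim!: oddE simp: algebra_simps)
          have R: "half (coeff (sub_pos N 1 h) (p' + N) - coeff (sub_pos N (-1) h) (p' + N)) =
              H (2*m0+1) j + (if 1 \<le> m0 then H (2*(m0-1)+1) (j + 2*N) else 0)"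
            using REC1[where Q="\<lambda>i j. coeff (coeff h i) j" and Ly=Ly and W=W and N=N and p=p', OF inj2 HK[unfolded H_def] HW[unfolded H_def] N0 W4] unfolding coeff_sub_pos[OF hK] pd pm H_def by simp
          have e1: "2*m0+1 = k" using False m0_def by auto
          have km: "k = 2*m0 + 1" using False m0_def by presburger
          have e2: "(if 1 \<le> m0 then H (2*(m0-1)+1) (j + 2*N) else 0) = (if 1 \<le> m0 then H (k-2) (j + 2*N) else 0)"
          proof (cases "1 \<le> m0")
            case True
            then have "2*(m0-1)+1 = k-2" using km by simp
            then show ?thesis by simp
          qed simp
          have "ev ?inp (\<lambda>s. ?tg ! s) (t2 Lx Ly u) = half (?inp!(0*Z+(N*k+j)) - ?inp!(1*Z+(N*k+j))) -
             (if 2 \<le> k \<and> j + 2*N < W then ?tg!((k-2)*W + (j+2*N)) else 0)"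
            unfolding t2u if_P[OF \<open>j < 2*N\<close>] if_not_P[OF False] ev_sub ev_Y by (rule refl)
          also have "\<dots> = H k j" unfolding i0 i1 unfolding kx Y R e1 e2 by simp
          finally show ?thesis .
        qed
        show ?thesis using wf ev tgu mu ZZ by simp
      next
        case False
        define k' where "k' = K2-1-k"
        define m1 where "m1 = k' div 2"
        define p' where "p' = 2*N*(m1+1) + (j - 2*N)"
        have j2: "j - 2*N < 2*N" using jW W4 by simp
        have pd: "p' div (2*N) = m1+1" using dm_div[OF j2, of "m1+1"] p'_def by simp
        have pm: "p' mod (2*N) = j - 2*N" using dm_mod[OF j2, of "m1+1"] p'_def by simp
        have k'K: "k' < K2" using kK k'_def by simp
        have ekk: "even k' = even k"
        proof -
          have "k' + k = 2*(Ly-1)" using kK k'_def K2_def by simp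
          then show ?thesis by (metis even_add even_mult_iff even_numeral)
        qed
        have x: "N*k' + j < Z" by (rule Nk[OF k'K jW])
        have i2: "?inp ! (2*Z + (N*k' + j)) = coeff (sub_rev N (2*Ly-1) 1 h) (N*k' + j)" using inpn[of 2 "N*k'+j"] x by simp
        have i3: "?inp ! (3*Z + (N*k' + j)) = coeff (sub_rev N (2*Ly-1) (-1) h) (N*k' + j)" using inpn[of 3 "N*k'+j"] x by simp
        have wf: "wft (4*Z) u (t2 Lx Ly u)"
        proof -
          have "(k-2)*W + (j-2*N) < u" if "2 \<le> k"
          proof -
            have "(k-2)*W + (j-2*N) < (k-2)*W + W" using jW by simp
            also have "\<dots> \<le> k*W" using that by (simp add: algebra_simps)
            finally show ?thesis using uk by simp
          qed
          moreover have "3*Z + (N*k' + j) < 4*Z" using x by simp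
          ultimately show ?thesis unfolding t2u k'_def[symmetric] using False by auto
        qed
        have kk: "2*Ly-1-1-k' = k" using kK k'_def K2_def by linarith
        have Qk': "Qr k' j = H k j" unfolding Qr_def H_def kk using k'K K2_def by simp
        have Qk2: "Qr (k'+2) (j - 2*N) = (if 2 \<le> k then ?tg ! ((k-2)*W + (j-2*N)) else 0)"
        proof (cases "2 \<le> k")
          case True
          have "2*Ly-1-1-(k'+2) = k-2" using True kK k'_def K2_def by simp
          moreover have "k'+2 < 2*Ly-1" using True kK k'_def K2_def by simp
          ultimately show ?thesis using tgo[of "j-2*N"] True jW unfolding Qr_def H_def by simp
        next
          case False
          then have "\<not> k'+2 < 2*Ly-1" using kK k'_def K2_def by simp
          then show ?thesis using False unfolding Qr_def by simp
        qed
        have ev: "ev ?inp (\<lambda>s. ?tg ! s) (t2 Lx Ly u) = H k j"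
        proof (cases "even k")
          case True
          then have "even k'" using ekk by simp
          then have kx: "N*k' + j = p'" unfolding p'_def m1_def using False by (auto elim!: evenE simp: algebra_simps)
          have R: "half (coeff (sub_rev N (2*Ly-1) 1 h) p' + coeff (sub_rev N (2*Ly-1) (-1) h) p') =
              Qr (2*(m1+1)) (j - 2*N) + Qr (2*m1) (j - 2*N + 2*N)"
            using REC0[where Q=Qr and Ly=Ly and W=W and N=N and p=p', OF inj2 QK QW N0 W4] unfolding hr1 hrm pd pm by simp
          have e1: "2*(m1+1) = k'+2" and e2: "2*m1 = k'" and e3: "j - 2*N + 2*N = j" using \<open>even k'\<close> m1_def False by auto
          have "ev ?inp (\<lambda>s. ?tg ! s) (t2 Lx Ly u) = half (?inp!(2*Z+(N*k'+j)) + ?inp!(3*Z+(N*k'+j))) -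
             (if 2 \<le> k then ?tg!((k-2)*W + (j-2*N)) else 0)"
            unfolding t2u k'_def[symmetric] if_not_P[OF False] if_P[OF True] ev_add ev_Y by (rule refl)
          also have "\<dots> = H k j" unfolding i2 i3 unfolding kx R e1 e2 e3 Qk' Qk2 by simp
          finally show ?thesis .
        next
          case odd: False
          then have "odd k'" using ekk by simp
          then have kx: "N*k' + j = p' + N" unfolding p'_def m1_def using False by (auto elim!: oddE simp: algebra_simps)
          have R: "half (coeff (sub_rev N (2*Ly-1) 1 h) (p' + N) - coeff (sub_rev N (2*Ly-1) (-1) h) (p' + N)) =
              Qr (2*(m1+1)+1) (j - 2*N) + Qr (2*m1+1) (j - 2*N + 2*N)"
            using REC1[where Q=Qr and Ly=Ly and W=W and N=N and p=p', OF inj2 QK QW N0 W4] unfolding hr1 hrm pd pm by simp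
          have e1: "2*(m1+1)+1 = k'+2" and e2: "2*m1+1 = k'" and e3: "j - 2*N + 2*N = j" using \<open>odd k'\<close> m1_def False by auto
          have "ev ?inp (\<lambda>s. ?tg ! s) (t2 Lx Ly u) = half (?inp!(2*Z+(N*k'+j)) - ?inp!(3*Z+(N*k'+j))) -
             (if 2 \<le> k then ?tg!((k-2)*W + (j-2*N)) else 0)"
            unfolding t2u k'_def[symmetric] if_not_P[OF False] if_not_P[OF odd] ev_sub ev_Y by (rule refl)
          also have "\<dots> = H k j" unfolding i2 i3 unfolding kx R e1 e2 e3 Qk' Qk2 by simp
          finally show ?thesis .
        qed
        show ?thesis using wf ev tgu mu ZZ by simp
      qed
    qed
  qed
qed




theorem proposition2p4:
  fixes dummy :: "'a::comm_ring_1"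
  assumes inj2: "inj (\<lambda>r::'a. 2 * r)"
  shows "\<exists>C::nat. \<forall>Lx Ly. 1 \<le> Lx \<longrightarrow> 1 \<le> Ly \<longrightarrow>
    (let N = (Lx + 1) div 2; M = N * (Ly - 1) + Lx in
     \<exists>P1 O1 P2 O2. length P1 \<le> C * Lx * Ly \<and> length P2 \<le> C * Lx * Ly \<and>
      (\<forall>f g :: 'a poly poly. has_len2 Lx Ly f \<longrightarrow> has_len2 Lx Ly g \<longrightarrow>
        (let h = f * g;
             fp = sub_pos N 1 f; fm = sub_pos N (-1) f; frp = sub_rev N Ly 1 f; frm = sub_rev N Ly (-1) f;
             gp = sub_pos N 1 g; gm = sub_pos N (-1) g; grp = sub_rev N Ly 1 g; grm = sub_rev N Ly (-1) g
         in (\<forall>p\<in>{fp, fm, frp, frm, gp, gm, grp, grm}. has_len M p) \<and>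
            sub_pos N 1 h = fp * gp \<and> sub_pos N (-1) h = fm * gm \<and>
            sub_rev N (2 * Ly - 1) 1 h = frp * grp \<and> sub_rev N (2 * Ly - 1) (-1) h = frm * grm \<and>
            slp_computes P1 O1 (coeff_list2 Lx Ly f @ coeff_list2 Lx Ly g)
              (concat (map (coeff_list M) [fp, fm, frp, frm, gp, gm, grp, grm])) \<and>
            slp_computes P2 O2
              (concat (map (coeff_list (2 * M - 1)) [fp * gp, fm * gm, frp * grp, frm * grm]))
              (coeff_list2 (2 * Lx - 1) (2 * Ly - 1) h))))"
proof (rule exI[of _ 128], intro allI impI)
  fix Lx Ly :: nat assume Lx: "1 \<le> Lx" and Ly: "1 \<le> Ly"
  define N where "N = (Lx+1) div 2"
  define M where "M = N*(Ly-1)+Lx"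
  define ts1 where "ts1 = map (t1 Lx Ly) [0..<8*M]"
  define ts2 where "ts2 = map (t2 Lx Ly) [0..<(2*Lx-1)*(2*Ly-1)]"
  have NL: "N \<le> Lx" using N_def by simp
  have MLe: "M \<le> Lx*Ly"
  proof -
    have a: "N*(Ly-1) \<le> Lx*(Ly-1)" using NL by (rule mult_le_mono1)
    have b: "Lx*(Ly-1) + Lx = Lx*Ly" using Ly by (cases Ly) auto
    show ?thesis using a b M_def by linarith
  qed
  have len1: "length (fst (compl ts1 (2*Lx*Ly) [])) \<le> 128*Lx*Ly"
  proof -
    have "length (fst (compl ts1 (2*Lx*Ly) [])) = sum_list (map tsz ts1)" by (rule compl_len)
    also have "\<dots> \<le> 7 * length ts1" by (rule sum_le_len) (use tsz_t1 in \<open>auto simp: ts1_def\<close>)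
    also have "\<dots> = 56 * M" by (simp add: ts1_def)
    also have "\<dots> \<le> 56 * (Lx*Ly)" using MLe by simp
    also have "\<dots> \<le> 128*Lx*Ly" by simp
    finally show ?thesis .
  qed
  have len2: "length (fst (compl ts2 (4*(2*M-1)) [])) \<le> 128*Lx*Ly"
  proof -
    have "length (fst (compl ts2 (4*(2*M-1)) [])) = sum_list (map tsz ts2)" by (rule compl_len)
    also have "\<dots> \<le> 4 * length ts2" by (rule sum_le_len) (use tsz_t2 in \<open>auto simp: ts2_def\<close>)
    also have "\<dots> = 4 * ((2*Lx-1)*(2*Ly-1))" by (simp add: ts2_def)
    also have "\<dots> \<le> 4 * ((2*Lx)*(2*Ly))" by (intro mult_le_mono2 mult_le_mono) auto
    also have "\<dots> = 16 * (Lx*Ly)" by simp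
    also have "\<dots> \<le> 128*Lx*Ly" by simp
    finally show ?thesis .
  qed
  show "let N = (Lx + 1) div 2; M = N * (Ly - 1) + Lx in
     \<exists>P1 O1 P2 O2. length P1 \<le> 128 * Lx * Ly \<and> length P2 \<le> 128 * Lx * Ly \<and>
      (\<forall>f g :: 'a poly poly. has_len2 Lx Ly f \<longrightarrow> has_len2 Lx Ly g \<longrightarrow>
        (let h = f * g;
             fp = sub_pos N 1 f; fm = sub_pos N (-1) f; frp = sub_rev N Ly 1 f; frm = sub_rev N Ly (-1) f;
             gp = sub_pos N 1 g; gm = sub_pos N (-1) g; grp = sub_rev N Ly 1 g; grm = sub_rev N Ly (-1) g
         in (\<forall>p\<in>{fp, fm, frp, frm, gp, gm, grp, grm}. has_len M p) \<and>
            sub_pos N 1 h = fp * gp \<and> sub_pos N (-1) h = fm * gm \<and>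
            sub_rev N (2 * Ly - 1) 1 h = frp * grp \<and> sub_rev N (2 * Ly - 1) (-1) h = frm * grm \<and>
            slp_computes P1 O1 (coeff_list2 Lx Ly f @ coeff_list2 Lx Ly g)
              (concat (map (coeff_list M) [fp, fm, frp, frm, gp, gm, grp, grm])) \<and>
            slp_computes P2 O2
              (concat (map (coeff_list (2 * M - 1)) [fp * gp, fm * gm, frp * grp, frm * grm]))
              (coeff_list2 (2 * Lx - 1) (2 * Ly - 1) h)))"
    unfolding Let_def N_def[symmetric] M_def[symmetric]
  proof (rule exI[of _ "fst (compl ts1 (2*Lx*Ly) [])"], rule exI[of _ "snd (compl ts1 (2*Lx*Ly) [])"],
      rule exI[of _ "fst (compl ts2 (4*(2*M-1)) [])"], rule exI[of _ "snd (compl ts2 (4*(2*M-1)) [])"],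
      intro conjI allI impI len1 len2)
    fix f g :: "'a poly poly"
    assume f: "has_len2 Lx Ly f" and g: "has_len2 Lx Ly g"
    have fK: "\<forall>i\<ge>Ly. coeff f i = 0" and gK: "\<forall>i\<ge>Ly. coeff g i = 0"
      using f g unfolding has_len2_def by auto
    have Mb: "N*(Ly-1) + Lx \<le> M" using M_def by simp
    show "\<forall>p\<in>{sub_pos N 1 f, sub_pos N (-1) f, sub_rev N Ly 1 f, sub_rev N Ly (-1) f,
        sub_pos N 1 g, sub_pos N (-1) g, sub_rev N Ly 1 g, sub_rev N Ly (-1) g}. has_len M p"
    proof (intro ballI)
      fix p assume "p \<in> {sub_pos N 1 f, sub_pos N (-1) f, sub_rev N Ly 1 f, sub_rev N Ly (-1) f,
        sub_pos N 1 g, sub_pos N (-1) g, sub_rev N Ly 1 g, sub_rev N Ly (-1) g}"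
      then consider "p = sub_pos N 1 f" | "p = sub_pos N (-1) f" | "p = sub_rev N Ly 1 f" | "p = sub_rev N Ly (-1) f" |
        "p = sub_pos N 1 g" | "p = sub_pos N (-1) g" | "p = sub_rev N Ly 1 g" | "p = sub_rev N Ly (-1) g"
        by (simp only: insert_iff empty_iff) blast
      then show "has_len M p"
        by cases (simp_all only: len_pos[OF f Mb] len_rev[OF f Mb] len_pos[OF g Mb] len_rev[OF g Mb])
    qed
    have pp: "sub_pos N s (f * g) = sub_pos N s f * sub_pos N s g" for s
      unfolding sub_pos_def by (rule poly_mult)
    have rr: "sub_rev N (2*Ly-1) s (f * g) = sub_rev N Ly s f * sub_rev N Ly s g" for s
    proof -
      have e: "Ly + Ly - 1 = 2*Ly-1" by simp
      show ?thesis unfolding sub_rev_hm by (rule hm_mult[OF fK gK Ly Ly, unfolded e])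
    qed
    show "sub_pos N 1 (f * g) = sub_pos N 1 f * sub_pos N 1 g" by (rule pp)
    show "sub_pos N (-1) (f * g) = sub_pos N (-1) f * sub_pos N (-1) g" by (rule pp)
    show "sub_rev N (2*Ly-1) 1 (f * g) = sub_rev N Ly 1 f * sub_rev N Ly 1 g" by (rule rr)
    show "sub_rev N (2*Ly-1) (-1) (f * g) = sub_rev N Ly (-1) f * sub_rev N Ly (-1) g" by (rule rr)
    show "slp_computes (fst (compl ts1 (2*Lx*Ly) [])) (snd (compl ts1 (2*Lx*Ly) [])) (coeff_list2 Lx Ly f @ coeff_list2 Lx Ly g)
      (concat (map (coeff_list M) [sub_pos N 1 f, sub_pos N (-1) f, sub_rev N Ly 1 f, sub_rev N Ly (-1) f,
          sub_pos N 1 g, sub_pos N (-1) g, sub_rev N Ly 1 g, sub_rev N Ly (-1) g]))"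
      unfolding ts1_def by (rule P1_ok[OF Lx Ly f g N_def M_def])
    have "slp_computes (fst (compl ts2 (4*(2*M-1)) [])) (snd (compl ts2 (4*(2*M-1)) []))
      (concat (map (coeff_list (2*M-1)) [sub_pos N 1 (f*g), sub_pos N (-1) (f*g), sub_rev N (2*Ly-1) 1 (f*g), sub_rev N (2*Ly-1) (-1) (f*g)]))
      (coeff_list2 (2*Lx-1) (2*Ly-1) (f*g))"
      unfolding ts2_def by (rule P2_ok[OF inj2 Lx Ly prod_len[OF f g] N_def M_def])
    then show "slp_computes (fst (compl ts2 (4*(2*M-1)) [])) (snd (compl ts2 (4*(2*M-1)) []))
      (concat (map (coeff_list (2*M-1)) [sub_pos N 1 f * sub_pos N 1 g, sub_pos N (-1) f * sub_pos N (-1) g,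
         sub_rev N Ly 1 f * sub_rev N Ly 1 g, sub_rev N Ly (-1) f * sub_rev N Ly (-1) g]))
      (coeff_list2 (2*Lx-1) (2*Ly-1) (f*g))"
      unfolding pp rr .
  qed
qed


end
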